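(* Let $n\ge1$. Every $1$-almost-increasing permutation $\pi\in S_n$ can be written as $\pi=x_n\circ x_{n-1}\circ\cdots\circ x_1(e_0)$ for exactly one word $x_n\cdots x_1$ of length $n$ over the alphabet $\{\rho_{1,1},\rho_{1,2},\rho_{2,1},\rho_{2,2}\}$ such that $x_1=\rho_{1,1}$ and the word contains neither $\rho_{2,1}\rho_{1,1}$ nor $\rho_{2,2}\rho_{1,1}$ as a substring of consecutive letters.
   Context: A permutation $\pi\in S_n$ (one-line form) is $1$-almost-increasing if for every $i$ there is at most one $j\le i$ with $\pi_j>i$; equivalently, it avoids $4321,4312,3421,3412$. $e_0$ is the empty permutation. For $\pi\in S_m$ and $1\le i,j\le m+1$, $\rho_{i,j}(\pi)\in S_{m+1}$ is obtained by increasing by $1$ every entry of $\pi$ that is $\ge i$ and inserting the value $i$ at position $j$; in particular $\rho_{1,1}(e_0)=[1]$. A word $x_n\cdots x_1$ denotes the composition with the rightmost letter $x_1$ applied first. *)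

theory Defs
  imports Main
begin

text \<open>Permutations in one-line form are lists of naturals: entry \<open>\<pi>_j\<close> is \<open>\<pi> ! (j-1)\<close>.\<close>

definition is_perm :: "nat \<Rightarrow> nat list \<Rightarrow> bool" where
  "is_perm n p \<longleftrightarrow> length p = n \<and> distinct p \<and> set p = {1..n}"

definition almost_inc1 :: "nat list \<Rightarrow> bool" where
  "almost_inc1 p \<longleftrightarrow>
     (\<forall>i \<in> {1..length p}. card {j \<in> {1..i}. p ! (j - 1) > i} \<le> 1)"

definition rho :: "nat \<Rightarrow> nat \<Rightarrow> nat list \<Rightarrow> nat list" where
  "rho i j p = (let q = map (\<lambda>x. if x \<ge> i then x + 1 else x) p
                in take (j - 1) q @ [i] @ drop (j - 1) q)"

text \<open>A word \<open>x_n \<cdots> x_1\<close> is the list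
  \<open>[x_n, ..., x_1]\<close> (left to right); its value on \<open>e_0\<close> applies \<open>x_1\<close> first.\<close>
definition alphabet :: "(nat \<times> nat) set" where
  "alphabet = {(1,1), (1,2), (2,1), (2,2)}"

definition eval_word :: "(nat \<times> nat) list \<Rightarrow> nat list" where
  "eval_word w = foldr (\<lambda>(i, j) p. rho i j p) w []"

definition has_forbidden :: "(nat \<times> nat) list \<Rightarrow> bool" where
  "has_forbidden w \<longleftrightarrow>
     (\<exists>k. Suc k < length w \<and> (w ! k = (2,1) \<or> w ! k = (2,2)) \<and> w ! Suc k = (1,1))"

end

theory Submission
  imports Defs
begin

definition vw :: "(nat \<times> nat) list \<Rightarrow> bool" where
  "vw w \<longleftrightarrow> w \<noteq> [] \<and> set w \<subseteq> alphabet \<and> last w = (1,1) \<and> \<not> has_forbidden w"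

lemma has_forbidden_Cons:
  "has_forbidden (h # w) \<longleftrightarrow>
     (w \<noteq> [] \<and> (h = (2,1) \<or> h = (2,2)) \<and> hd w = (1,1)) \<or> has_forbidden w"
proof
  assume "has_forbidden (h # w)"
  then obtain k where k: "Suc k < length (h#w)" "(h#w) ! k = (2,1) \<or> (h#w) ! k = (2,2)"
    "(h#w) ! Suc k = (1,1)" unfolding has_forbidden_def by blast
  show "(w \<noteq> [] \<and> (h = (2,1) \<or> h = (2,2)) \<and> hd w = (1,1)) \<or> has_forbidden w"
  proof (cases k)
    case 0 then show ?thesis using k by (auto simp: hd_conv_nth)
  next
    case (Suc k') then show ?thesis using k unfolding has_forbidden_def by auto
  qed
next
  assume "(w \<noteq> [] \<and> (h = (2,1) \<or> h = (2,2)) \<and> hd w = (1,1)) \<or> has_forbidden w"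
  then show "has_forbidden (h # w)"
  proof
    assume a: "w \<noteq> [] \<and> (h = (2,1) \<or> h = (2,2)) \<and> hd w = (1,1)"
    show ?thesis unfolding has_forbidden_def
      by (rule exI[of _ 0]) (use a in \<open>auto simp: hd_conv_nth\<close>)
  next
    assume "has_forbidden w"
    then obtain k where k: "Suc k < length w" "w ! k = (2,1) \<or> w ! k = (2,2)"
      "w ! Suc k = (1,1)" unfolding has_forbidden_def by blast
    show ?thesis unfolding has_forbidden_def
      by (rule exI[of _ "Suc k"]) (use k in auto)
  qed
qed

lemma has_forbidden_Nil[simp]: "\<not> has_forbidden []"
  by (simp add: has_forbidden_def)

lemma vw_Cons:
  "vw (h # w) \<longleftrightarrow> h \<in> alphabet \<and> (w = [] \<longrightarrow> h = (1,1)) \<and>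
     (w \<noteq> [] \<longrightarrow> vw w \<and> \<not> ((h = (2,1) \<or> h = (2,2)) \<and> hd w = (1,1)))"
  unfolding vw_def has_forbidden_Cons by auto

lemma eval_Cons: "eval_word (h # w) = rho (fst h) (snd h) (eval_word w)"
  by (cases h) (simp add: eval_word_def)

lemma length_rho: "length (rho i j p) = Suc (length p)"
  by (simp add: rho_def Let_def)

lemma length_eval: "length (eval_word w) = length w"
  by (induction w) (auto simp: eval_Cons length_rho eval_word_def)

lemma alph: "h \<in> alphabet \<Longrightarrow> h = (1,1) \<or> h = (1,2) \<or> h = (2,1) \<or> h = (2,2)"
  by (auto simp: alphabet_def)

lemma L1: "vw w \<Longrightarrow> eval_word w ! 0 = 1 \<Longrightarrow> hd w = (1,1)"
proof (induction w)
  case Nil then show ?case by (simp add: vw_def)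
next
  case (Cons h w)
  show ?case
  proof (cases "w = []")
    case True then show ?thesis using Cons.prems by (simp add: vw_Cons)
  next
    case False
    then obtain s r where sr: "eval_word w = s # r"
      using length_eval[of w] by (cases "eval_word w") auto
    have vw: "vw w" and nf: "\<not> ((h = (2,1) \<or> h = (2,2)) \<and> hd w = (1,1))" and ha: "h \<in> alphabet"
      using Cons.prems False by (auto simp: vw_Cons)
    have e: "rho (fst h) (snd h) (s # r) ! 0 = 1" using Cons.prems(2) sr by (simp add: eval_Cons)
    from alph[OF ha] show ?thesis
    proof (elim disjE)
      assume "h = (2,2)"
      then have "s = 1" using e by (auto simp: rho_def split: if_splits)
      then have "hd w = (1,1)" using Cons.IH vw sr by simp
      then show ?thesis using nf \<open>h = (2,2)\<close> by simp
    qed (use e in \<open>auto simp: rho_def split: if_splits\<close>)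
  qed
qed

lemma ins_inj: "take k (q1::nat list) @ [i] @ drop k q1 = take k q2 @ [i] @ drop k q2 \<Longrightarrow> length q1 = length q2 \<Longrightarrow> q1 = q2"
proof -
  assume a: "take k (q1::nat list) @ [i] @ drop k q1 = take k q2 @ [i] @ drop k q2" and l: "length q1 = length q2"
  then have "take k q1 = take k q2 \<and> drop k q1 = drop k q2" by (simp add: append_eq_append_conv)
  then show ?thesis by (metis append_take_drop_id)
qed

lemma map_inc_inj: "map (\<lambda>x::nat. if i \<le> x then x + 1 else x) xs = map (\<lambda>x. if i \<le> x then x + 1 else x) ys \<Longrightarrow> xs = ys"
proof -
  have "inj (\<lambda>x::nat. if i \<le> x then x + 1 else x)" by (auto simp: inj_def split: if_splits)
  then show "map (\<lambda>x. if i \<le> x then x + 1 else x) xs = map (\<lambda>x. if i \<le> x then x + 1 else x) ys \<Longrightarrow> xs = ys"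
    by (simp add: inj_map_eq_map)
qed

lemma rho_inj: "rho i j a = rho i j b \<Longrightarrow> length a = length b \<Longrightarrow> a = b"
proof -
  assume e: "rho i j a = rho i j b" and l: "length a = length b"
  have "map (\<lambda>x::nat. if i \<le> x then x + 1 else x) a = map (\<lambda>x. if i \<le> x then x + 1 else x) b"
    by (rule ins_inj[of "j - 1" _ i]) (use e l in \<open>simp_all add: rho_def Let_def\<close>)
  then show ?thesis by (rule map_inc_inj)
qed

lemma uniq: "vw w1 \<Longrightarrow> vw w2 \<Longrightarrow> eval_word w1 = eval_word w2 \<Longrightarrow> w1 = w2"
proof (induction w1 arbitrary: w2)
  case Nil then show ?case by (simp add: vw_def)
next
  case (Cons h1 t1)
  obtain h2 t2 where w2: "w2 = h2 # t2" using Cons.prems(2) by (cases w2) (auto simp: vw_def)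
  have len: "length t1 = length t2" using length_eval[of "h1#t1"] length_eval[of w2] Cons.prems(3) w2 by simp
  show ?case
  proof (cases "t1 = []")
    case True then show ?thesis using len w2 Cons.prems by (auto simp: vw_Cons)
  next
    case False
    then have F2: "t2 \<noteq> []" using len by auto
    obtain s1 r1 where sr1: "eval_word t1 = s1 # r1"
      using length_eval[of t1] False by (cases "eval_word t1") auto
    obtain s2 r2 where sr2: "eval_word t2 = s2 # r2"
      using length_eval[of t2] F2 by (cases "eval_word t2") auto
    have v1: "vw t1" and nf1: "\<not> ((h1 = (2,1) \<or> h1 = (2,2)) \<and> hd t1 = (1,1))" and ha1: "h1 \<in> alphabet"
      using Cons.prems False by (auto simp: vw_Cons)
    have v2: "vw t2" and nf2: "\<not> ((h2 = (2,1) \<or> h2 = (2,2)) \<and> hd t2 = (1,1))" and ha2: "h2 \<in> alphabet"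
      using Cons.prems F2 w2 by (auto simp: vw_Cons)
    have E: "rho (fst h1) (snd h1) (s1 # r1) = rho (fst h2) (snd h2) (s2 # r2)"
      using Cons.prems(3) w2 sr1 sr2 by (simp add: eval_Cons)
    have l1: "s1 = 1 \<Longrightarrow> hd t1 = (1,1)" using L1[OF v1] sr1 by simp
    have l2: "s2 = 1 \<Longrightarrow> hd t2 = (1,1)" using L1[OF v2] sr2 by simp
    have hh: "h1 = h2"
      using alph[OF ha1] alph[OF ha2] E l1 l2 nf1 nf2
      by (auto simp: rho_def split: if_splits)
    have "length r1 = length r2" using len length_eval[of t1] length_eval[of t2] sr1 sr2 by simp
    then have "s1 # r1 = s2 # r2" using E hh rho_inj[of "fst h2" "snd h2" "s1 # r1" "s2 # r2"] by simp
    then have "t1 = t2" using Cons.IH v1 v2 sr1 sr2 by simp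
    then show ?thesis using hh w2 by simp
  qed
qed

definition dec :: "nat \<Rightarrow> nat \<Rightarrow> nat" where "dec i x = (if i < x then x - 1 else x)"

lemma count_filter:
  assumes "k \<le> length p"
  shows "card {j \<in> {1..k}. k < p ! (j - 1)} = length (filter ((<) k) (take k p))"
proof -
  have "{j \<in> {1..k}. k < p ! (j - 1)} = Suc ` {j. j < k \<and> k < p ! j}"
    by (auto simp: image_iff) (metis One_nat_def Suc_pred' diff_Suc_1 less_eq_Suc_le not_le not_less_eq_eq)
  then have "card {j \<in> {1..k}. k < p ! (j - 1)} = card {j. j < k \<and> k < p ! j}"
    by (simp add: card_image)
  also have "\<dots> = card {j. j < length (take k p) \<and> k < take k p ! j}"
    using assms by (metis (lifting) length_take min.absorb2 nth_take)
  finally show ?thesis by (simp add: length_filter_conv_card)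
qed

lemma ai_iff: "almost_inc1 p \<longleftrightarrow> (\<forall>k\<in>{1..length p}. length (filter ((<) k) (take k p)) \<le> 1)"
  unfolding almost_inc1_def
proof (intro ball_cong refl)
  fix k assume "k \<in> {1..length p}"
  then show "(card {j \<in> {1..k}. k < p ! (j - 1)} \<le> 1) = (length (filter ((<) k) (take k p)) \<le> 1)"
    using count_filter[of k p] by simp
qed

lemma hd11: "w \<noteq> [] \<Longrightarrow> hd w = (1,1) \<Longrightarrow> eval_word w ! 0 = 1"
  by (cases w) (auto simp: eval_Cons rho_def)

lemma decomp:
  assumes P: "is_perm (Suc m) p" and A: "almost_inc1 p" and i: "i = 1 \<or> i = 2" and j: "j = 1 \<or> j = 2"
    and pq: "p = take (j-1) q @ [i] @ drop (j-1) q" and m: "m \<ge> 1"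
  shows "is_perm m (map (dec i) q) \<and> almost_inc1 (map (dec i) q) \<and> rho i j (map (dec i) q) = p"
proof -
  have "length p = Suc (length q)" using pq by (simp add: min_def)
  then have lq: "length q = m" using P by (simp add: is_perm_def)
  have tdq: "set (take (j-1) q) \<union> set (drop (j-1) q) = set q"
    by (metis append_take_drop_id set_append)
  have sp: "set p = insert i (set q)" using pq tdq by auto
  have dp: "distinct p" using P by (simp add: is_perm_def)
  then have d2: "distinct (take (j-1) q) \<and> distinct (drop (j-1) q) \<and> i \<notin> set (take (j-1) q)
     \<and> i \<notin> set (drop (j-1) q) \<and> set (take (j-1) q) \<inter> set (drop (j-1) q) = {}"
    using pq by simp
  then have iq: "i \<notin> set q" using tdq by blast
  have "distinct (take (j-1) q @ drop (j-1) q)" using d2 by (simp only: distinct_append)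
  then have dq: "distinct q" by simp
  have spp: "set p = {1..Suc m}" using P by (simp add: is_perm_def)
  have sq: "set q = {1..Suc m} - {i}" using sp spp iq by auto
  have im: "i \<le> Suc m" using sp spp by auto
  have ri: "map (\<lambda>x. if i \<le> x then x + 1 else x) (map (dec i) q) = q"
    using iq by (induction q) (auto simp: dec_def)
  have R: "rho i j (map (dec i) q) = p" unfolding rho_def Let_def ri using pq by simp
  have inj: "inj_on (dec i) (set q)"
  proof (rule inj_onI)
    fix x y assume xy: "x \<in> set q" "y \<in> set q" "dec i x = dec i y"
    then have "x \<noteq> i" "y \<noteq> i" using iq by auto
    then show "x = y" using xy(3) unfolding dec_def by (auto split: if_splits)
  qed
  have "dec i ` ({1..Suc m} - {i}) = {1..m}"
  proof
    show "dec i ` ({1..Suc m} - {i}) \<subseteq> {1..m}" using im i by (auto simp: dec_def)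
    show "{1..m} \<subseteq> dec i ` ({1..Suc m} - {i})"
    proof
      fix y assume y: "y \<in> {1..m}"
      show "y \<in> dec i ` ({1..Suc m} - {i})"
      proof (cases "y < i")
        case True then show ?thesis using y by (intro image_eqI[of _ _ y]) (auto simp: dec_def)
      next
        case False then show ?thesis using y by (intro image_eqI[of _ _ "Suc y"]) (auto simp: dec_def)
      qed
    qed
  qed
  then have Pm: "is_perm m (map (dec i) q)" using sq inj dq lq by (simp add: is_perm_def distinct_map)
  have Ap: "\<forall>k\<in>{1..Suc m}. length (filter ((<) k) (take k p)) \<le> 1" using A P by (simp add: ai_iff is_perm_def)
  have "length (filter ((<) k) (take k (map (dec i) q))) \<le> 1" if k: "k \<in> {1..m}" for k
  proof -
    have f: "filter ((<) k) (take k (map (dec i) q)) = map (dec i) (filter ((<) (Suc k)) (take k q))"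
    proof -
      have "\<forall>x\<in>set (take k q). (k < dec i x) = (Suc k < x)"
      proof
        fix x assume "x \<in> set (take k q)"
        then have "x \<in> set q" by (meson in_set_takeD)
        then have "x \<noteq> i" "x \<ge> 1" using sq by auto
        then show "(k < dec i x) = (Suc k < x)" using i k by (auto simp: dec_def)
      qed
      then show ?thesis by (simp add: take_map filter_map comp_def cong: filter_cong)
    qed
    have "length (filter ((<) (Suc k)) (take (Suc k) p)) = length (filter ((<) (Suc k)) (take k q))"
      using j
    proof
      assume "j = 1"
      then have "p = i # q" using pq by simp
      moreover have "\<not> Suc k < i" using i k by auto
      ultimately show ?thesis by simp
    next
      assume j2: "j = 2"
      then obtain a q' where q: "q = a # q'" using lq m by (cases q) auto
      obtain k' where k': "k = Suc k'" using k by (cases k) auto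
      have "p = a # i # q'" using pq j2 q by simp
      moreover have "\<not> Suc k < i" using i k by auto
      ultimately show ?thesis using k' q by simp
    qed
    moreover have "length (filter ((<) (Suc k)) (take (Suc k) p)) \<le> 1" using Ap k by auto
    ultimately show ?thesis using f by simp
  qed
  then have "almost_inc1 (map (dec i) q)" using lq by (simp add: ai_iff)
  then show ?thesis using Pm R by simp
qed

lemma exist: "is_perm n p \<Longrightarrow> almost_inc1 p \<Longrightarrow> n \<ge> 1 \<Longrightarrow> \<exists>w. length w = n \<and> vw w \<and> eval_word w = p"
proof (induction n arbitrary: p)
  case 0 then show ?case by simp
next
  case (Suc m)
  show ?case
  proof (cases "m = 0")
    case True
    then have "length p = 1" "set p = {1}" using Suc.prems by (auto simp: is_perm_def)
    then have "p = [1]" by (cases p) auto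
    then show ?thesis using True
      by (intro exI[of _ "[(1,1)]"]) (auto simp: vw_def alphabet_def eval_word_def rho_def has_forbidden_Cons)
  next
    case False
    then have m: "m \<ge> 1" by simp
    have lp: "length p = Suc m" and dp: "distinct p" and spp: "set p = {1..Suc m}"
      using Suc.prems by (auto simp: is_perm_def)
    obtain a b r where p: "p = a # b # r" using lp m
      by (metis One_nat_def Suc_le_length_iff le_SucI not_less_eq_eq)
    have ab: "a \<in> {1..Suc m}" "b \<in> {1..Suc m}" "a \<noteq> b" using spp dp p by auto
    have "length (filter ((<) 2) (take 2 p)) \<le> 1" using Suc.prems(2) lp m by (simp add: ai_iff)
    then have c2: "a \<le> 2 \<or> b \<le> 2" using p by (auto split: if_splits)
    have "\<exists>i j q. (i = 1 \<or> i = 2) \<and> (j = 1 \<or> j = 2) \<and> p = take (j-1) q @ [i] @ drop (j-1) q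
        \<and> q \<noteq> [] \<and> (i = 2 \<longrightarrow> dec i (hd q) \<noteq> 1)"
    proof (cases "a = 1")
      case True then show ?thesis using p by (intro exI[of _ 1] exI[of _ 1] exI[of _ "b # r"]) auto
    next
      case F1: False
      show ?thesis
      proof (cases "a = 2 \<and> b \<noteq> 1")
        case True then show ?thesis using p ab
          by (intro exI[of _ 2] exI[of _ 1] exI[of _ "b # r"]) (auto simp: dec_def)
      next
        case F2: False
        show ?thesis
        proof (cases "b = 1")
          case True then show ?thesis using p by (intro exI[of _ 1] exI[of _ 2] exI[of _ "a # r"]) auto
        next
          case False
          then have "b = 2" "a > 2" using F1 F2 c2 ab by auto
          then show ?thesis using p
            by (intro exI[of _ 2] exI[of _ 2] exI[of _ "a # r"]) (auto simp: dec_def)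
        qed
      qed
    qed
    then obtain i j q where i: "i = 1 \<or> i = 2" and j: "j = 1 \<or> j = 2"
      and pq: "p = take (j-1) q @ [i] @ drop (j-1) q" and qn: "q \<noteq> []"
      and hq: "i = 2 \<longrightarrow> dec i (hd q) \<noteq> 1" by blast
    have D: "is_perm m (map (dec i) q) \<and> almost_inc1 (map (dec i) q) \<and> rho i j (map (dec i) q) = p"
      using decomp[OF Suc.prems(1) Suc.prems(2) i j pq m] .
    then obtain w' where w': "length w' = m" "vw w'" "eval_word w' = map (dec i) q"
      using Suc.IH m by blast
    have wn: "w' \<noteq> []" using w' m by auto
    have "hd w' \<noteq> (1,1)" if "i = 2"
    proof
      assume "hd w' = (1,1)"
      then have "eval_word w' ! 0 = 1" using hd11 wn by blast
      then have "dec i (hd q) = 1" using w'(3) qn by (cases q) auto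
      then show False using hq that by simp
    qed
    then have "vw ((i,j) # w')" using w' wn i j by (auto simp: vw_Cons alphabet_def)
    moreover have "eval_word ((i,j) # w') = p" using D w' by (simp add: eval_Cons)
    ultimately show ?thesis using w' by (intro exI[of _ "(i,j) # w'"]) simp
  qed
qed

theorem theorem7p5:
  fixes n :: nat and p :: "nat list"
  assumes "n \<ge> 1" and "is_perm n p" and "almost_inc1 p"
  shows "\<exists>!w. length w = n \<and> set w \<subseteq> alphabet \<and> last w = (1,1)
              \<and> \<not> has_forbidden w \<and> eval_word w = p"
proof -
  obtain w where w: "length w = n" "vw w" "eval_word w = p" using exist assms by blast
  show ?thesis
  proof (rule ex1I[of _ w])
    show "length w = n \<and> set w \<subseteq> alphabet \<and> last w = (1,1) \<and> \<not> has_forbidden w \<and> eval_word w = p"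
      using w by (simp add: vw_def)
  next
    fix w2 assume "length w2 = n \<and> set w2 \<subseteq> alphabet \<and> last w2 = (1,1) \<and> \<not> has_forbidden w2 \<and> eval_word w2 = p"
    then have "vw w2" "eval_word w2 = p" using assms(1) by (auto simp: vw_def)
    then show "w2 = w" using uniq w by simp
  qed
qed

end
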